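(* Let $\gamma\ge1$ be an integer, $C\subset\{0,1,\dots,p^\gamma-1\}$ nonempty (viewed both as a subset of $\mathbb{Z}/p^\gamma\mathbb{Z}$ and of $\mathbb{Z}_p$), and $\Omega=\bigsqcup_{c\in C}(c+p^\gamma\mathbb{Z}_p)$. The following are equivalent: (i) $\Omega$ tiles $\mathbb{Z}_p$, i.e. there is $T\subset\mathbb{Z}_p$ such that $\mathbb{Z}_p$ is the disjoint union of the sets $\Omega+t$, $t\in T$; (ii) $C$ tiles $\mathbb{Z}/p^\gamma\mathbb{Z}$; (iii) $\Omega$ tiles $\mathbb{Q}_p$.
   Context: $p\ge2$ is a prime. $\mathfrak{m}$ is the Haar measure on $\mathbb{Q}_p$. $C$ tiles $\mathbb{Z}/p^\gamma\mathbb{Z}$ if there is $S\subset\mathbb{Z}/p^\gamma\mathbb{Z}$ such that every element of $\mathbb{Z}/p^\gamma\mathbb{Z}$ is uniquely written as $c+s$ with $c\in C$, $s\in S$. $\Omega$ tiles $\mathbb{Q}_p$ if there is $T\subset\mathbb{Q}_p$ with $\sum_{t\in T}1_\Omega(x-t)=1$ for $\mathfrak{m}$-a.e. $x$. *)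

theory Defs
  imports Complex_Main "HOL-Computational_Algebra.Primes"
begin

text \<open>An element x of Q_p is represented
by the compatible family of its residues x mod p^n Z_p (n = 0,1,2,...), each residue
being taken as the unique representative in Z[1/p] \<inter> [0, p^n).  Thus
Q_p = inverse limit of Z[1/p] / p^n Z, and Z_p is the set of x whose residue mod
Z_p (the component n = 0) vanishes.\<close>

definition red :: "int \<Rightarrow> nat \<Rightarrow> rat \<Rightarrow> rat" where
  "red p n q = q - of_int p ^ n * of_int \<lfloor>q / of_int p ^ n\<rfloor>"

definition Qp :: "int \<Rightarrow> (nat \<Rightarrow> rat) set" where
  "Qp p = {f. \<forall>n. (\<exists>k::nat. \<exists>a::int. f n = of_int a / of_int p ^ k)
                 \<and> 0 \<le> f n \<and> f n < of_int p ^ n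
                 \<and> f n = red p n (f (Suc n))}"

definition Zp :: "int \<Rightarrow> (nat \<Rightarrow> rat) set" where
  "Zp p = {f \<in> Qp p. f 0 = 0}"

definition qp_add :: "int \<Rightarrow> (nat \<Rightarrow> rat) \<Rightarrow> (nat \<Rightarrow> rat) \<Rightarrow> (nat \<Rightarrow> rat)" where
  "qp_add p x y = (\<lambda>n. red p n (x n + y n))"

definition qp_diff :: "int \<Rightarrow> (nat \<Rightarrow> rat) \<Rightarrow> (nat \<Rightarrow> rat) \<Rightarrow> (nat \<Rightarrow> rat)" where
  "qp_diff p x y = (\<lambda>n. red p n (x n - y n))"

definition qp_of_int :: "int \<Rightarrow> int \<Rightarrow> (nat \<Rightarrow> rat)" where
  "qp_of_int p c = (\<lambda>n. red p n (of_int c))"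

text \<open>Membership in p^k Z_p (k an arbitrary integer).\<close>
definition in_pk :: "int \<Rightarrow> int \<Rightarrow> (nat \<Rightarrow> rat) \<Rightarrow> bool" where
  "in_pk p k y = (if 0 \<le> k then y (nat k) = 0
                  else (\<exists>m::int. of_int p ^ nat (- k) * y 0 = of_int m))"

definition qp_ball :: "int \<Rightarrow> (nat \<Rightarrow> rat) \<Rightarrow> int \<Rightarrow> (nat \<Rightarrow> rat) set" where
  "qp_ball p a k = {x \<in> Qp p. in_pk p k (qp_diff p x a)}"

text \<open>Null sets for the Haar measure m on Q_p (normalised by m(a + p^k Z_p) = p^(-k)):
outer measure zero, i.e. coverable by countably many balls of arbitrarily small total
measure.\<close>
definition haar_null :: "int \<Rightarrow> (nat \<Rightarrow> rat) set \<Rightarrow> bool" where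
  "haar_null p N = (N \<subseteq> Qp p \<and>
     (\<forall>\<epsilon>>0. \<exists>(a :: nat \<Rightarrow> nat \<Rightarrow> rat) (k :: nat \<Rightarrow> int).
        (\<forall>i. a i \<in> Qp p) \<and> N \<subseteq> (\<Union>i. qp_ball p (a i) (k i)) \<and>
        summable (\<lambda>i. real_of_int p powr (- real_of_int (k i))) \<and>
        (\<Sum>i. real_of_int p powr (- real_of_int (k i))) < \<epsilon>))"

text \<open>Omega tiles Q_p: there is T \<subseteq> Q_p such that for m-a.e. x,
sum over t in T of 1_Omega(x - t) = 1, i.e. exactly one t \<in> T has x - t \<in> Omega.\<close>
definition tiles_Qp :: "int \<Rightarrow> (nat \<Rightarrow> rat) set \<Rightarrow> bool" where
  "tiles_Qp p \<Omega> = (\<exists>T \<subseteq> Qp p.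
      haar_null p {x \<in> Qp p. \<not> (\<exists>!t. t \<in> T \<and> qp_diff p x t \<in> \<Omega>)})"

definition tiles_Zp :: "int \<Rightarrow> (nat \<Rightarrow> rat) set \<Rightarrow> bool" where
  "tiles_Zp p \<Omega> = (\<exists>T \<subseteq> Zp p.
      (\<Union>t\<in>T. (\<lambda>w. qp_add p w t) ` \<Omega>) = Zp p \<and>
      (\<forall>t\<in>T. \<forall>s\<in>T. t \<noteq> s \<longrightarrow>
          ((\<lambda>w. qp_add p w t) ` \<Omega>) \<inter> ((\<lambda>w. qp_add p w s) ` \<Omega>) = {}))"

definition tiles_ZN :: "int \<Rightarrow> int set \<Rightarrow> bool" where
  "tiles_ZN N C = (\<exists>S \<subseteq> {0..<N}. \<forall>x\<in>{0..<N}.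
      \<exists>!cs. cs \<in> C \<times> S \<and> (fst cs + snd cs) mod N = x)"

end

theory Submission
  imports Defs
begin


lemma red_alt: "red p n q = q - of_int p ^ n * of_int \<lfloor>q / of_int p ^ n\<rfloor>"
  by (simp add: red_def)

lemma red_bounds:
  assumes "(p::int) > 0"
  shows "0 \<le> red p n q" "red p n q < of_int p ^ n"
proof -
  have P: "(0::rat) < of_int p ^ n" using assms by simp
  have "of_int \<lfloor>q / of_int p ^ n\<rfloor> * of_int p ^ n \<le> q" by (rule floor_divide_lower[OF P])
  then show "0 \<le> red p n q" by (simp add: red_def algebra_simps)
  have "q < (of_int \<lfloor>q / of_int p ^ n\<rfloor> + 1) * of_int p ^ n" by (rule floor_divide_upper[OF P])
  then show "red p n q < of_int p ^ n" by (simp add: red_def algebra_simps)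
qed

lemma red_cong:
  assumes "(p::int) > 0" "a = b + of_int p ^ n * of_int k"
  shows "red p n a = red p n b"
proof -
  have P: "(of_int p ^ n :: rat) \<noteq> 0" using assms by simp
  have "a / of_int p ^ n = b / of_int p ^ n + of_int k" using P assms(2) by (simp add: field_simps)
  then have "\<lfloor>a / of_int p ^ n\<rfloor> = \<lfloor>b / of_int p ^ n\<rfloor> + k" by simp
  then show ?thesis using assms(2) by (simp add: red_def algebra_simps)
qed

lemma red_id:
  assumes "(p::int) > 0" "0 \<le> q" "q < of_int p ^ n"
  shows "red p n q = q"
proof -
  have P: "(0::rat) < of_int p ^ n" using assms by simp
  have "\<lfloor>q / of_int p ^ n\<rfloor> = 0" using assms P by (simp add: floor_eq_iff)
  then show ?thesis by (simp add: red_def)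
qed

lemma red_decomp: "q = red p n q + of_int p ^ n * of_int \<lfloor>q / of_int p ^ n\<rfloor>"
  by (simp add: red_def)

lemma red_red:
  assumes "(p::int) > 0" "n \<le> m"
  shows "red p n (red p m q) = red p n q"
proof -
  have "of_int p ^ m = (of_int p ^ n * of_int (p ^ (m - n)) :: rat)"
    using assms(2) by (simp add: power_add[symmetric])
  then have "red p m q = q + of_int p ^ n * of_int (- (p ^ (m - n) * \<lfloor>q / of_int p ^ m\<rfloor>))"
    by (simp add: red_def algebra_simps)
  then show ?thesis using red_cong[OF assms(1)] by blast
qed

lemma red_add_red: "(p::int) > 0 \<Longrightarrow> red p n (red p n a + b) = red p n (a + b)"
  by (rule red_cong[where k = "- \<lfloor>a / of_int p ^ n\<rfloor>"]) (auto simp: red_def algebra_simps)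

lemma red_add_red2: "(p::int) > 0 \<Longrightarrow> red p n (a + red p n b) = red p n (a + b)"
  by (rule red_cong[where k = "- \<lfloor>b / of_int p ^ n\<rfloor>"]) (auto simp: red_def algebra_simps)

lemma red_diff_red: "(p::int) > 0 \<Longrightarrow> red p n (red p n a - b) = red p n (a - b)"
  by (rule red_cong[where k = "- \<lfloor>a / of_int p ^ n\<rfloor>"]) (auto simp: red_def algebra_simps)

lemma red_diff_red2: "(p::int) > 0 \<Longrightarrow> red p n (a - red p n b) = red p n (a - b)"
  by (rule red_cong[where k = "\<lfloor>b / of_int p ^ n\<rfloor>"]) (auto simp: red_def algebra_simps)

lemma red_of_int:
  assumes "(p::int) > 0"
  shows "red p n (of_int a) = of_int (a mod p ^ n)"
proof -
  have "\<lfloor>(of_int a :: rat) / of_int p ^ n\<rfloor> = a div p ^ n"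
    by (metis floor_divide_of_int_eq of_int_power)
  then show ?thesis by (simp add: red_def minus_div_mult_eq_mod [symmetric] algebra_simps)
qed

lemma red_zero: "red p n 0 = 0" by (simp add: red_def)

lemma red_zero_iff:
  assumes "(p::int) > 0" "0 \<le> u" "u < of_int p ^ n" "0 \<le> v" "v < of_int p ^ n"
  shows "red p n (u - v) = 0 \<longleftrightarrow> u = v"
proof
  assume h: "red p n (u - v) = 0"
  define f where "f = \<lfloor>(u - v) / of_int p ^ n\<rfloor>"
  have e: "u - v = of_int p ^ n * of_int f" using red_decomp[of "u - v" p n] h by (simp add: f_def)
  have P: "(0::rat) < of_int p ^ n" using assms by simp
  have "u - v < of_int p ^ n" using assms by linarith
  then have "of_int p ^ n * of_int f < of_int p ^ n * (1::rat)" using e by simp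
  then have "of_int f < (1::rat)" using P mult_less_cancel_left_pos by blast
  moreover have "- (of_int p ^ n) < u - v" using assms by linarith
  then have "of_int p ^ n * (-1::rat) < of_int p ^ n * of_int f" using e by simp
  then have "(-1::rat) < of_int f" using P mult_less_cancel_left_pos by blast
  ultimately have "f = 0" by linarith
  then show "u = v" using e by simp
qed (simp add: red_zero)




definition dy :: "int \<Rightarrow> rat \<Rightarrow> bool" where
  "dy p q = (\<exists>k::nat. \<exists>a::int. q = of_int a / of_int p ^ k)"

lemma dy_int: "dy p (of_int a)"
  unfolding dy_def by (rule exI[of _ 0]) auto

lemma dy_add:
  assumes "(p::int) > 0" "dy p a" "dy p b" shows "dy p (a + b)"
proof -
  obtain k x where a: "a = of_int x / of_int p ^ k" using assms(2) by (auto simp: dy_def)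
  obtain l y where b: "b = of_int y / of_int p ^ l" using assms(3) by (auto simp: dy_def)
  have P: "(of_int p :: rat) ^ k \<noteq> 0" "(of_int p :: rat) ^ l \<noteq> 0" using assms by auto
  have "a + b = (of_int x * of_int p ^ l + of_int y * of_int p ^ k) / (of_int p ^ k * of_int p ^ l)"
    unfolding a b using P by (simp add: add_frac_eq)
  also have "\<dots> = of_int (x * p ^ l + y * p ^ k) / of_int p ^ (k + l)"
    by (simp add: power_add)
  finally show ?thesis unfolding dy_def by blast
qed
lemma dy_neg: "dy p a \<Longrightarrow> dy p (- a)"
  unfolding dy_def by (metis minus_divide_left of_int_minus)

lemma dy_diff: "(p::int) > 0 \<Longrightarrow> dy p a \<Longrightarrow> dy p b \<Longrightarrow> dy p (a - b)"
  using dy_add[of p a "- b"] dy_neg[of p b] by simp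

lemma dy_red: assumes "(p::int) > 0" "dy p q" shows "dy p (red p n q)"
proof -
  have e: "red p n q = q - of_int (p ^ n * \<lfloor>q / of_int p ^ n\<rfloor>)" by (simp add: red_def)
  show ?thesis unfolding e by (rule dy_diff[OF assms(1) assms(2) dy_int])
qed

lemma Qp_iff: "x \<in> Qp p \<longleftrightarrow> (\<forall>n. dy p (x n) \<and> 0 \<le> x n \<and> x n < of_int p ^ n \<and> x n = red p n (x (Suc n)))"
  unfolding Qp_def dy_def by simp

lemma QpD:
  assumes "x \<in> Qp p"
  shows "dy p (x n)" "0 \<le> x n" "x n < of_int p ^ n" "x n = red p n (x (Suc n))"
  using assms unfolding Qp_iff by blast+

lemma Qp_comp:
  assumes "(p::int) > 0" "x \<in> Qp p" "n \<le> m"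
  shows "x n = red p n (x m)"
  using assms(3)
proof (induction m)
  case 0 then show ?case using red_id[OF assms(1) QpD(2,3)[OF assms(2)]] by simp
next
  case (Suc m)
  show ?case
  proof (cases "n = Suc m")
    case True then show ?thesis using red_id[OF assms(1) QpD(2,3)[OF assms(2)]] by simp
  next
    case False
    then have "n \<le> m" using Suc by simp
    then have "x n = red p n (x m)" using Suc by simp
    also have "\<dots> = red p n (red p m (x (Suc m)))" using QpD(4)[OF assms(2), of m] by (rule arg_cong)
    also have "\<dots> = red p n (x (Suc m))" using red_red[OF assms(1) \<open>n \<le> m\<close>] by simp
    finally show ?thesis .
  qed
qed

lemma emb_Qp:
  assumes "(p::int) > 0" "dy p q"
  shows "(\<lambda>n. red p n q) \<in> Qp p"
  unfolding Qp_iff using dy_red[OF assms] red_bounds[OF assms(1)] red_red[OF assms(1)] by auto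

lemma qp_of_int_Qp: "(p::int) > 0 \<Longrightarrow> qp_of_int p c \<in> Qp p"
  unfolding qp_of_int_def using emb_Qp dy_int by blast

lemma qp_add_Qp:
  assumes "(p::int) > 0" "x \<in> Qp p" "y \<in> Qp p"
  shows "qp_add p x y \<in> Qp p"
  unfolding Qp_iff qp_add_def
proof (intro allI conjI)
  fix n
  show "dy p (red p n (x n + y n))" using dy_red[OF assms(1) dy_add[OF assms(1) QpD(1)[OF assms(2)] QpD(1)[OF assms(3)]]] .
  show "0 \<le> red p n (x n + y n)" "red p n (x n + y n) < of_int p ^ n" using red_bounds[OF assms(1)] by auto
  have "red p n (x n + y n) = red p n (red p n (x (Suc n)) + red p n (y (Suc n)))"
    using QpD(4)[OF assms(2), of n] QpD(4)[OF assms(3), of n] by simp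
  also have "\<dots> = red p n (x (Suc n) + y (Suc n))"
    using red_add_red[OF assms(1)] red_add_red2[OF assms(1)] by simp
  also have "\<dots> = red p n (red p (Suc n) (x (Suc n) + y (Suc n)))"
    using red_red[OF assms(1), of n "Suc n"] by simp
  finally show "red p n (x n + y n) = red p n (red p (Suc n) (x (Suc n) + y (Suc n)))" .
qed

lemma qp_diff_Qp:
  assumes "(p::int) > 0" "x \<in> Qp p" "y \<in> Qp p"
  shows "qp_diff p x y \<in> Qp p"
  unfolding Qp_iff qp_diff_def
proof (intro allI conjI)
  fix n
  show "dy p (red p n (x n - y n))" using dy_red[OF assms(1) dy_diff[OF assms(1) QpD(1)[OF assms(2)] QpD(1)[OF assms(3)]]] .
  show "0 \<le> red p n (x n - y n)" "red p n (x n - y n) < of_int p ^ n" using red_bounds[OF assms(1)] by auto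
  have "red p n (x n - y n) = red p n (red p n (x (Suc n)) - red p n (y (Suc n)))"
    using QpD(4)[OF assms(2), of n] QpD(4)[OF assms(3), of n] by simp
  also have "\<dots> = red p n (x (Suc n) - y (Suc n))"
    using red_diff_red[OF assms(1)] red_diff_red2[OF assms(1)] by simp
  also have "\<dots> = red p n (red p (Suc n) (x (Suc n) - y (Suc n)))"
    using red_red[OF assms(1), of n "Suc n"] by simp
  finally show "red p n (x n - y n) = red p n (red p (Suc n) (x (Suc n) - y (Suc n)))" .
qed

lemma add_diff_cancel_qp:
  assumes "(p::int) > 0" "z \<in> Qp p"
  shows "qp_add p (qp_diff p z t) t = z"
proof
  fix n
  have "red p n (red p n (z n - t n) + t n) = red p n (z n - t n + t n)" using red_add_red[OF assms(1)] by simp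
  also have "\<dots> = z n" using red_id[OF assms(1) QpD(2,3)[OF assms(2)]] by simp
  finally show "qp_add p (qp_diff p z t) t n = z n" by (simp add: qp_add_def qp_diff_def)
qed

lemma diff_add_cancel_qp:
  assumes "(p::int) > 0" "w \<in> Qp p"
  shows "qp_diff p (qp_add p w t) t = w"
proof
  fix n
  have "red p n (red p n (w n + t n) - t n) = red p n (w n + t n - t n)" using red_diff_red[OF assms(1)] by simp
  also have "\<dots> = w n" using red_id[OF assms(1) QpD(2,3)[OF assms(2)]] by simp
  finally show "qp_diff p (qp_add p w t) t n = w n" by (simp add: qp_add_def qp_diff_def)
qed

lemma translate_iff:
  assumes "(p::int) > 0" "t \<in> Qp p" "Om \<subseteq> Qp p"
  shows "z \<in> (\<lambda>w. qp_add p w t) ` Om \<longleftrightarrow> z \<in> Qp p \<and> qp_diff p z t \<in> Om"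
proof
  assume "z \<in> (\<lambda>w. qp_add p w t) ` Om"
  then obtain w where w: "w \<in> Om" "z = qp_add p w t" by auto
  have wq: "w \<in> Qp p" using w(1) assms(3) by blast
  have "z \<in> Qp p" unfolding w(2) by (rule qp_add_Qp[OF assms(1) wq assms(2)])
  moreover have "qp_diff p z t = w" unfolding w(2) by (rule diff_add_cancel_qp[OF assms(1) wq])
  ultimately show "z \<in> Qp p \<and> qp_diff p z t \<in> Om" using w(1) by simp
next
  assume h: "z \<in> Qp p \<and> qp_diff p z t \<in> Om"
  have "z = qp_add p (qp_diff p z t) t" using add_diff_cancel_qp[OF assms(1)] h by simp
  then show "z \<in> (\<lambda>w. qp_add p w t) ` Om" using h by blast
qed

lemma Zp_int:
  assumes "(p::int) > 0" "x \<in> Zp p"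
  shows "x n = of_int \<lfloor>x n\<rfloor>"
proof -
  have x: "x \<in> Qp p" "x 0 = 0" using assms(2) by (auto simp: Zp_def)
  have "x 0 = red p 0 (x n)" using Qp_comp[OF assms(1) x(1), of 0 n] by simp
  then have "x n - of_int \<lfloor>x n\<rfloor> = 0" using x(2) by (simp add: red_def)
  then show ?thesis by simp
qed

lemma Zp_intro:
  assumes "(p::int) > 0" "x \<in> Qp p" "x m = of_int a"
  shows "x \<in> Zp p"
proof -
  have "x 0 = red p 0 (x m)" using Qp_comp[OF assms(1,2), of 0 m] by simp
  then have "x 0 = 0" using assms(3) by (simp add: red_def)
  then show ?thesis using assms(2) by (simp add: Zp_def)
qed




lemma mod_swap:
  assumes "(N::int) > 0" "0 \<le> c" "c < N" "0 \<le> r" "r < N"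
  shows "(c + s) mod N = r \<longleftrightarrow> (r - s) mod N = c"
proof
  assume "(c + s) mod N = r"
  then have "(r - s) mod N = ((c + s) mod N - s) mod N" by simp
  also have "\<dots> = c mod N" by (simp add: mod_diff_left_eq)
  finally show "(r - s) mod N = c" using assms by simp
next
  assume "(r - s) mod N = c"
  then have "(c + s) mod N = ((r - s) mod N + s) mod N" by simp
  also have "\<dots> = r mod N" by (simp add: mod_add_left_eq)
  finally show "(c + s) mod N = r" using assms by simp
qed

locale setting =
  fixes p :: int and \<gamma> :: nat and C :: "int set"
  assumes prime: "prime p" and g1: "\<gamma> \<ge> 1" and Csub: "C \<subseteq> {0..<p ^ \<gamma>}" and Cne: "C \<noteq> {}"
begin

lemma p1: "p > 1" using prime by (simp add: prime_gt_1_int)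
lemma p0: "p > 0" using p1 by simp
lemma N0: "p ^ \<gamma> > 0" using p0 by simp

definition Om where "Om = {x \<in> Qp p. \<exists>c\<in>C. x \<gamma> = of_int c}"

lemma Om_sub: "Om \<subseteq> Qp p" unfolding Om_def by blast

lemma Cb: "c \<in> C \<Longrightarrow> 0 \<le> c \<and> c < p ^ \<gamma>" using Csub by auto

lemma ball_eq: "(\<Union>c\<in>C. qp_ball p (qp_of_int p c) (int \<gamma>)) = Om"
proof -
  have "x \<in> qp_ball p (qp_of_int p c) (int \<gamma>) \<longleftrightarrow> x \<in> Qp p \<and> x \<gamma> = of_int c" if c: "c \<in> C" for x c
  proof -
    have rc: "red p \<gamma> (of_int c) = of_int c" using red_of_int[OF p0] Cb[OF c] by simp
    have "x \<in> qp_ball p (qp_of_int p c) (int \<gamma>) \<longleftrightarrow> x \<in> Qp p \<and> red p \<gamma> (x \<gamma> - of_int c) = 0"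
      by (simp add: qp_ball_def in_pk_def qp_diff_def qp_of_int_def rc)
    also have "\<dots> \<longleftrightarrow> x \<in> Qp p \<and> x \<gamma> = of_int c"
    proof (cases "x \<in> Qp p")
      case True
      have "0 \<le> (of_int c :: rat)" "(of_int c :: rat) < of_int p ^ \<gamma>"
        using Cb[OF c] by (simp, metis of_int_less_iff of_int_power)
      then show ?thesis using red_zero_iff[OF p0 QpD(2,3)[OF True]] True by simp
    qed simp
    finally show ?thesis .
  qed
  then show ?thesis unfolding Om_def by blast
qed

lemma diff_Om:
  assumes "x \<in> Qp p" "t \<in> Qp p"
  shows "qp_diff p x t \<in> Om \<longleftrightarrow> (\<exists>c\<in>C. red p \<gamma> (x \<gamma> - t \<gamma>) = of_int c)"
  using qp_diff_Qp[OF p0 assms] unfolding Om_def by (simp add: qp_diff_def)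

lemma key_iff:
  "red p \<gamma> (of_int r - of_int s) = of_int c \<longleftrightarrow> (r - s) mod p ^ \<gamma> = c"
proof -
  have "red p \<gamma> (of_int r - of_int s) = of_int ((r - s) mod p ^ \<gamma>)"
    using red_of_int[OF p0, of \<gamma> "r - s"] by simp
  then show ?thesis by simp
qed

lemma key_iff2:
  assumes "0 \<le> r" "r < p ^ \<gamma>"
  shows "(\<exists>c\<in>C. red p \<gamma> (of_int r - of_int s) = of_int c) \<longleftrightarrow> (\<exists>c\<in>C. (c + s) mod p ^ \<gamma> = r)"
  using key_iff mod_swap[OF N0 _ _ assms] Cb by blast

lemma Qp_gamma_int:
  assumes "x \<in> Zp p"
  shows "x \<gamma> = of_int \<lfloor>x \<gamma>\<rfloor> \<and> 0 \<le> \<lfloor>x \<gamma>\<rfloor> \<and> \<lfloor>x \<gamma>\<rfloor> < p ^ \<gamma>"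
proof -
  have x: "x \<in> Qp p" using assms by (simp add: Zp_def)
  have e: "x \<gamma> = of_int \<lfloor>x \<gamma>\<rfloor>" using Zp_int[OF p0 assms] .
  have "0 \<le> x \<gamma>" "x \<gamma> < of_int p ^ \<gamma>" using QpD(2,3)[OF x] by auto
  then have "0 \<le> \<lfloor>x \<gamma>\<rfloor>" "\<lfloor>x \<gamma>\<rfloor> < p ^ \<gamma>" using e by (simp, metis of_int_less_iff of_int_power)
  then show ?thesis using e by simp
qed

lemma Qp_gamma_int1: "x \<in> Zp p \<Longrightarrow> x \<gamma> = of_int \<lfloor>x \<gamma>\<rfloor>"
  using Qp_gamma_int by blast

lemma Qp_gamma_int2: "x \<in> Zp p \<Longrightarrow> \<lfloor>x \<gamma>\<rfloor> \<in> {0..<p ^ \<gamma>}"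
  using Qp_gamma_int by simp

lemma Qp_of_int_gamma: "0 \<le> r \<Longrightarrow> r < p ^ \<gamma> \<Longrightarrow> qp_of_int p r \<gamma> = of_int r"
  unfolding qp_of_int_def using red_of_int[OF p0] by simp

lemma qp_of_int_Zp: "qp_of_int p r \<in> Zp p"
  using Zp_intro[OF p0 qp_of_int_Qp[OF p0], of r 0 0] unfolding qp_of_int_def
  by (simp add: red_def)

end



context setting begin

lemma img_iff:
  assumes "t \<in> Qp p"
  shows "z \<in> (\<lambda>w. qp_add p w t) ` Om \<longleftrightarrow> z \<in> Qp p \<and> (\<exists>c\<in>C. red p \<gamma> (z \<gamma> - t \<gamma>) = of_int c)"
  using translate_iff[OF p0 assms Om_sub] diff_Om[OF _ assms] by blast

lemma swapC: "c \<in> C \<Longrightarrow> 0 \<le> r \<Longrightarrow> r < p ^ \<gamma> \<Longrightarrow> (c + s) mod p ^ \<gamma> = r \<longleftrightarrow> (r - s) mod p ^ \<gamma> = c"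
  using mod_swap[OF N0] Cb by blast

lemma Zp_Qp: "x \<in> Zp p \<Longrightarrow> x \<in> Qp p" by (simp add: Zp_def)

lemma i_ii: assumes "tiles_Zp p Om" shows "tiles_ZN (p ^ \<gamma>) C"
proof -
  obtain T where T: "T \<subseteq> Zp p" and U: "(\<Union>t\<in>T. (\<lambda>w. qp_add p w t) ` Om) = Zp p"
    and D: "\<forall>t\<in>T. \<forall>s\<in>T. t \<noteq> s \<longrightarrow> ((\<lambda>w. qp_add p w t) ` Om) \<inter> ((\<lambda>w. qp_add p w s) ` Om) = {}"
    using assms unfolding tiles_Zp_def by (elim exE conjE) (rule that; assumption)
  define S where "S = {s. \<exists>t\<in>T. t \<gamma> = of_int s}"
  have S: "S \<subseteq> {0..<p ^ \<gamma>}"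
  proof
    fix s assume "s \<in> S"
    then obtain t where t: "t \<in> T" "t \<gamma> = of_int s" unfolding S_def by blast
    have "s = \<lfloor>t \<gamma>\<rfloor>" using t by simp
    then show "s \<in> {0..<p ^ \<gamma>}" using Qp_gamma_int2[of t] t T by auto
  qed
  have memb: "qp_of_int p r \<in> (\<lambda>w. qp_add p w t) ` Om \<longleftrightarrow> (\<exists>c\<in>C. (c + s) mod p ^ \<gamma> = r)"
    if "t \<in> T" "t \<gamma> = of_int s" "0 \<le> r" "r < p ^ \<gamma>" for t s r
  proof -
    have tq: "t \<in> Qp p" using that T Zp_Qp by blast
    show ?thesis
      unfolding img_iff[OF tq] using qp_of_int_Qp[OF p0] Qp_of_int_gamma[OF that(3,4)] that(2)
        key_iff2[OF that(3,4)] by simp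
  qed
  show ?thesis unfolding tiles_ZN_def
  proof (intro exI[of _ S] conjI S ballI)
    fix r assume r: "r \<in> {0..<p ^ \<gamma>}"
    then have r0: "0 \<le> r" "r < p ^ \<gamma>" by auto
    have "qp_of_int p r \<in> Zp p" by (rule qp_of_int_Zp)
    then obtain t where t: "t \<in> T" "qp_of_int p r \<in> (\<lambda>w. qp_add p w t) ` Om" using U by blast
    define s where "s = \<lfloor>t \<gamma>\<rfloor>"
    have ts: "t \<gamma> = of_int s" unfolding s_def using Qp_gamma_int1[of t] t T by blast
    have sS: "s \<in> S" using t ts unfolding S_def by blast
    obtain c where c: "c \<in> C" "(c + s) mod p ^ \<gamma> = r" using memb[OF t(1) ts r0] t(2) by blast
    show "\<exists>!cs. cs \<in> C \<times> S \<and> (fst cs + snd cs) mod p ^ \<gamma> = r"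
    proof (rule ex1I[of _ "(c, s)"])
      show "(c, s) \<in> C \<times> S \<and> (fst (c, s) + snd (c, s)) mod p ^ \<gamma> = r" using c sS by simp
    next
      fix cs assume h: "cs \<in> C \<times> S \<and> (fst cs + snd cs) mod p ^ \<gamma> = r"
      obtain c' s' where cs: "cs = (c', s')" by (cases cs)
      have c': "c' \<in> C" "s' \<in> S" "(c' + s') mod p ^ \<gamma> = r" using h cs by auto
      obtain t' where t': "t' \<in> T" "t' \<gamma> = of_int s'" using c'(2) unfolding S_def by blast
      have "qp_of_int p r \<in> (\<lambda>w. qp_add p w t') ` Om" using memb[OF t' r0] c' by blast
      then have "t' = t" using D[rule_format, OF t'(1) t(1)] t(2) by blast
      then have "s' = s" using t' ts by simp
      moreover have "c' = c"
      proof -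
        have "(r - s) mod p ^ \<gamma> = c" using swapC[OF c(1) r0] c(2) by blast
        moreover have "(r - s') mod p ^ \<gamma> = c'" using swapC[OF c'(1) r0] c'(3) by blast
        ultimately show ?thesis using \<open>s' = s\<close> by simp
      qed
      ultimately show "cs = (c, s)" using cs by simp
    qed
  qed
qed

lemma ii_i: assumes "tiles_ZN (p ^ \<gamma>) C" shows "tiles_Zp p Om"
proof -
  obtain S where S: "S \<subseteq> {0..<p ^ \<gamma>}"
    and H: "\<forall>r\<in>{0..<p ^ \<gamma>}. \<exists>!cs. cs \<in> C \<times> S \<and> (fst cs + snd cs) mod p ^ \<gamma> = r"
    using assms unfolding tiles_ZN_def by (elim exE conjE) (rule that; assumption)
  define T where "T = qp_of_int p ` S"
  have tg: "qp_of_int p s \<gamma> = of_int s" if "s \<in> S" for s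
    using Qp_of_int_gamma that S by auto
  have A: "z \<in> Zp p" if As: "s \<in> S" "z \<in> (\<lambda>w. qp_add p w (qp_of_int p s)) ` Om" for s z
  proof -
    have "z \<in> Qp p \<and> (\<exists>c\<in>C. red p \<gamma> (z \<gamma> - qp_of_int p s \<gamma>) = of_int c)"
      using img_iff[OF qp_of_int_Qp[OF p0]] that(2) by blast
    then obtain c where z: "z \<in> Qp p" "c \<in> C" "red p \<gamma> (z \<gamma> - of_int s) = of_int c"
      using tg[OF As(1)] by auto
    have "z \<gamma> - of_int s = of_int c + of_int p ^ \<gamma> * of_int \<lfloor>(z \<gamma> - of_int s) / of_int p ^ \<gamma>\<rfloor>"
      using red_decomp[of "z \<gamma> - of_int s" p \<gamma>] z(3) by simp
    then have "z \<gamma> = of_int (s + c + p ^ \<gamma> * \<lfloor>(z \<gamma> - of_int s) / of_int p ^ \<gamma>\<rfloor>)"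
      by (simp add: algebra_simps)
    then show ?thesis using Zp_intro[OF p0 z(1)] by blast
  qed
  have B: "z \<in> (\<lambda>w. qp_add p w (qp_of_int p s)) ` Om \<longleftrightarrow> (\<exists>c\<in>C. (c + s) mod p ^ \<gamma> = \<lfloor>z \<gamma>\<rfloor>)"
    if "s \<in> S" "z \<in> Zp p" for s z
  proof -
    have zg: "z \<gamma> = of_int \<lfloor>z \<gamma>\<rfloor>" "0 \<le> \<lfloor>z \<gamma>\<rfloor>" "\<lfloor>z \<gamma>\<rfloor> < p ^ \<gamma>"
      using Qp_gamma_int1[OF that(2)] apply blast using Qp_gamma_int2[OF that(2)] by auto
    have "z \<in> (\<lambda>w. qp_add p w (qp_of_int p s)) ` Om \<longleftrightarrow> (\<exists>c\<in>C. red p \<gamma> (z \<gamma> - qp_of_int p s \<gamma>) = of_int c)"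
      using img_iff[OF qp_of_int_Qp[OF p0]] Zp_Qp[OF that(2)] by blast
    also have "\<dots> \<longleftrightarrow> (\<exists>c\<in>C. red p \<gamma> (of_int \<lfloor>z \<gamma>\<rfloor> - of_int s) = of_int c)"
      unfolding tg[OF that(1)] by (subst zg(1), rule refl)
    also have "\<dots> \<longleftrightarrow> (\<exists>c\<in>C. (c + s) mod p ^ \<gamma> = \<lfloor>z \<gamma>\<rfloor>)" by (rule key_iff2[OF zg(2,3)])
    finally show ?thesis .
  qed
  show ?thesis unfolding tiles_Zp_def
  proof (intro exI[of _ T] conjI)
    show "T \<subseteq> Zp p" unfolding T_def using qp_of_int_Zp by blast
    show "(\<Union>t\<in>T. (\<lambda>w. qp_add p w t) ` Om) = Zp p"
    proof
      show "(\<Union>t\<in>T. (\<lambda>w. qp_add p w t) ` Om) \<subseteq> Zp p"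
      proof
        fix z assume "z \<in> (\<Union>t\<in>T. (\<lambda>w. qp_add p w t) ` Om)"
        then obtain s where "s \<in> S" "z \<in> (\<lambda>w. qp_add p w (qp_of_int p s)) ` Om"
          unfolding T_def by blast
        then show "z \<in> Zp p" by (rule A)
      qed
      show "Zp p \<subseteq> (\<Union>t\<in>T. (\<lambda>w. qp_add p w t) ` Om)"
      proof
        fix z assume z: "z \<in> Zp p"
        have r: "\<lfloor>z \<gamma>\<rfloor> \<in> {0..<p ^ \<gamma>}" using Qp_gamma_int2[OF z] .
        obtain cs where "cs \<in> C \<times> S \<and> (fst cs + snd cs) mod p ^ \<gamma> = \<lfloor>z \<gamma>\<rfloor>"
          using H[rule_format, OF r] by (elim ex1E) blast
        then obtain c s where cs: "c \<in> C" "s \<in> S" "(c + s) mod p ^ \<gamma> = \<lfloor>z \<gamma>\<rfloor>"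
          by (cases cs) auto
        have "z \<in> (\<lambda>w. qp_add p w (qp_of_int p s)) ` Om" using B[OF cs(2) z] cs by blast
        then show "z \<in> (\<Union>t\<in>T. (\<lambda>w. qp_add p w t) ` Om)" unfolding T_def using cs(2) by blast
      qed
    qed
    show "\<forall>t\<in>T. \<forall>s\<in>T. t \<noteq> s \<longrightarrow> ((\<lambda>w. qp_add p w t) ` Om) \<inter> ((\<lambda>w. qp_add p w s) ` Om) = {}"
    proof (intro ballI impI)
      fix t t' assume t: "t \<in> T" "t' \<in> T" "t \<noteq> t'"
      obtain s s' where ss: "s \<in> S" "s' \<in> S" "t = qp_of_int p s" "t' = qp_of_int p s'"
        using t unfolding T_def by blast
      have ne: "s \<noteq> s'" using ss t(3) by blast
      show "((\<lambda>w. qp_add p w t) ` Om) \<inter> ((\<lambda>w. qp_add p w t') ` Om) = {}"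
      proof (rule ccontr)
        assume "((\<lambda>w. qp_add p w t) ` Om) \<inter> ((\<lambda>w. qp_add p w t') ` Om) \<noteq> {}"
        then obtain z where z1: "z \<in> (\<lambda>w. qp_add p w (qp_of_int p s)) ` Om"
          and z2: "z \<in> (\<lambda>w. qp_add p w (qp_of_int p s')) ` Om" using ss by blast
        have zZ: "z \<in> Zp p" using A[OF ss(1) z1] .
        have r: "\<lfloor>z \<gamma>\<rfloor> \<in> {0..<p ^ \<gamma>}" using Qp_gamma_int2[OF zZ] .
        obtain c where c: "c \<in> C" "(c + s) mod p ^ \<gamma> = \<lfloor>z \<gamma>\<rfloor>" using B[OF ss(1) zZ] z1 by blast
        obtain c' where c': "c' \<in> C" "(c' + s') mod p ^ \<gamma> = \<lfloor>z \<gamma>\<rfloor>" using B[OF ss(2) zZ] z2 by blast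
        obtain cs0 where "\<forall>y. y \<in> C \<times> S \<and> (fst y + snd y) mod p ^ \<gamma> = \<lfloor>z \<gamma>\<rfloor> \<longrightarrow> y = cs0"
          using H[rule_format, OF r] by (elim ex1E) blast
        then have "(c, s) = cs0" "(c', s') = cs0" using c c' ss by auto
        then have "(c, s) = (c', s')" by simp
        then show False using ne by simp
      qed
    qed
  qed
qed

end



locale nullctx =
  fixes p :: int and a :: "nat \<Rightarrow> nat \<Rightarrow> rat" and kk :: "nat \<Rightarrow> nat"
  assumes p1: "p > 1" and aQ: "\<And>i. a i \<in> Qp p"
    and sm: "summable (\<lambda>i. (1 / real_of_int p) ^ kk i)"
begin

lemma p0: "p > 0" using p1 by simp

definition q :: real where "q = 1 / real_of_int p"

lemma q0: "0 < q" and q1: "q < 1" and pq: "real_of_int p * q = 1"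
  using p1 unfolding q_def by auto

lemma smq: "summable (\<lambda>i. q ^ kk i)" using sm unfolding q_def .

definition tm :: "nat \<Rightarrow> (nat \<Rightarrow> rat) \<Rightarrow> nat \<Rightarrow> real" where
  "tm m y i = (if m \<le> kk i then (if a i m = y m then q ^ kk i else 0)
               else (if a i (kk i) = y (kk i) then q ^ m else 0))"

definition W :: "nat \<Rightarrow> (nat \<Rightarrow> rat) \<Rightarrow> real" where
  "W m y = (\<Sum>i. tm m y i)"

lemma tm_nonneg: "0 \<le> tm m y i"
  unfolding tm_def using q0 by auto

lemma tm_le: "tm m y i \<le> q ^ kk i"
proof -
  have "q ^ m \<le> q ^ kk i" if "\<not> m \<le> kk i" using that q0 q1 by (intro power_decreasing) auto
  then show ?thesis unfolding tm_def using q0 by auto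
qed

lemma tm_summable: "summable (tm m y)"
  by (rule summable_comparison_test'[OF smq, of 0]) (use tm_nonneg tm_le in auto)

lemma W_ge: "tm m y j \<le> W m y"
proof -
  have "sum (tm m y) {j} \<le> W m y"
    unfolding W_def by (rule sum_le_suminf[OF tm_summable]) (auto simp: tm_nonneg)
  then show ?thesis by simp
qed

lemma W_le: "W m y \<le> (\<Sum>i. q ^ kk i)"
  unfolding W_def by (rule suminf_le[OF tm_le tm_summable smq])

definition zc :: "nat \<Rightarrow> (nat \<Rightarrow> rat) \<Rightarrow> nat \<Rightarrow> nat \<Rightarrow> rat" where
  "zc m y j = (\<lambda>n. red p n (y m + of_int (int j * p ^ m)))"

lemma zc_Qp: "y \<in> Qp p \<Longrightarrow> zc m y j \<in> Qp p"
  unfolding zc_def by (rule emb_Qp[OF p0 dy_add[OF p0 QpD(1) dy_int]])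

lemma zc_low: assumes "y \<in> Qp p" "K \<le> m" shows "zc m y j K = y K"
proof -
  have "of_int p ^ m = (of_int p ^ K * of_int (p ^ (m - K)) :: rat)"
    using assms(2) by (simp add: power_add[symmetric])
  then have "y m + of_int (int j * p ^ m) = y m + of_int p ^ K * of_int (int j * p ^ (m - K))"
    by simp
  then have "red p K (y m + of_int (int j * p ^ m)) = red p K (y m)"
    by (rule red_cong[OF p0])
  also have "\<dots> = y K" using Qp_comp[OF p0 assms(1) assms(2)] by simp
  finally show ?thesis unfolding zc_def .
qed

lemma zc_top: assumes "y \<in> Qp p" "j < nat p"
  shows "zc m y j (Suc m) = y m + of_int (int j * p ^ m)"
proof -
  have y: "0 \<le> y m" "y m < of_int p ^ m" using QpD(2,3)[OF assms(1)] by auto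
  have j: "int j \<le> p - 1" using assms(2) by simp
  have "(of_int (int j * p ^ m) :: rat) \<le> of_int ((p - 1) * p ^ m)"
    using j p0 by (intro of_int_le_iff[THEN iffD2] mult_right_mono) auto
  then have "y m + of_int (int j * p ^ m) < of_int p ^ m + of_int ((p - 1) * p ^ m)"
    by (rule add_less_le_mono[OF y(2)])
  also have "\<dots> = of_int p ^ Suc m" by (simp add: algebra_simps)
  finally have "y m + of_int (int j * p ^ m) < of_int p ^ Suc m" .
  moreover have "0 \<le> y m + of_int (int j * p ^ m)" using y p0 by simp
  ultimately show ?thesis unfolding zc_def by (rule red_id[OF p0, rotated])
qed

lemma zc_inj: assumes "y \<in> Qp p" "j < nat p" "j' < nat p" "zc m y j (Suc m) = zc m y j' (Suc m)"
  shows "j = j'"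
proof -
  have "(of_int (int j * p ^ m) :: rat) = of_int (int j' * p ^ m)" using assms zc_top by simp
  then have "int j * p ^ m = int j' * p ^ m" by (simp only: of_int_eq_iff)
  then show ?thesis using p0 by simp
qed

lemma zc_back: assumes "y \<in> Qp p" "j < nat p" "b \<in> Qp p" "b (Suc m) = zc m y j (Suc m)"
  shows "b m = y m"
proof -
  have "b m = red p m (b (Suc m))" using Qp_comp[OF p0 assms(3), of m "Suc m"] by simp
  also have "\<dots> = red p m (zc m y j (Suc m))" using assms(4) by simp
  also have "\<dots> = zc m y j m" using Qp_comp[OF p0 zc_Qp[OF assms(1)], of m "Suc m"] by simp
  also have "\<dots> = y m" using zc_low[OF assms(1)] by simp
  finally show ?thesis .
qed

lemma zc_fwd: assumes "y \<in> Qp p" "b \<in> Qp p" "b m = y m"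
  shows "\<exists>j<nat p. b (Suc m) = zc m y j (Suc m)"
proof -
  define f where "f = \<lfloor>b (Suc m) / of_int p ^ m\<rfloor>"
  have P: "(0::rat) < of_int p ^ m" using p0 by simp
  have e: "b (Suc m) = b m + of_int p ^ m * of_int f"
    using red_decomp[of "b (Suc m)" p m] Qp_comp[OF p0 assms(2), of m "Suc m"] unfolding f_def by simp
  have b: "0 \<le> b (Suc m)" "b (Suc m) < of_int p * of_int p ^ m" using QpD(2,3)[OF assms(2), of "Suc m"] by auto
  have "0 \<le> b (Suc m) / of_int p ^ m" using b P by simp
  then have f0: "0 \<le> f" unfolding f_def by simp
  have "b (Suc m) / of_int p ^ m < of_int p" using b P by (simp add: divide_less_eq mult.commute)
  then have f1: "f < p" unfolding f_def by (simp add: floor_less_iff)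
  have "b (Suc m) = y m + of_int (int (nat f) * p ^ m)" using e assms(3) f0 by (simp add: algebra_simps)
  then have "b (Suc m) = zc m y (nat f) (Suc m)" using zc_top[OF assms(1)] f0 f1 by simp
  moreover have "nat f < nat p" using f0 f1 by simp
  ultimately show ?thesis by blast
qed

lemma tm_split: assumes "y \<in> Qp p"
  shows "tm m y i = (\<Sum>j<nat p. tm (Suc m) (zc m y j) i)"
proof (cases "Suc m \<le> kk i")
  case True
  then have m: "m \<le> kk i" by simp
  have R: "(\<Sum>j<nat p. tm (Suc m) (zc m y j) i) =
           (\<Sum>j<nat p. if a i (Suc m) = zc m y j (Suc m) then q ^ kk i else 0)"
    unfolding tm_def using True by simp
  show ?thesis
  proof (cases "a i m = y m")
    case False
    have "a i (Suc m) \<noteq> zc m y j (Suc m)" if "j < nat p" for j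
      using zc_back[OF assms that aQ] False by blast
    then show ?thesis using R m False unfolding tm_def by simp
  next
    case True
    obtain j0 where j0: "j0 < nat p" "a i (Suc m) = zc m y j0 (Suc m)" using zc_fwd[OF assms aQ True] by blast
    have "(\<Sum>j<nat p. if a i (Suc m) = zc m y j (Suc m) then q ^ kk i else 0) =
          (\<Sum>j<nat p. if j = j0 then q ^ kk i else 0)"
    proof (rule sum.cong[OF refl])
      fix j assume "j \<in> {..<nat p}"
      then have jl: "j < nat p" by simp
      have "a i (Suc m) = zc m y j (Suc m) \<longleftrightarrow> j = j0"
      proof
        assume h: "a i (Suc m) = zc m y j (Suc m)"
        show "j = j0" by (rule zc_inj[OF assms jl j0(1), of m]) (use h j0(2) in simp)
      qed (use j0(2) in simp)
      then show "(if a i (Suc m) = zc m y j (Suc m) then q ^ kk i else 0) = (if j = j0 then q ^ kk i else 0)"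
        by simp
    qed
    also have "\<dots> = q ^ kk i" using j0(1) by (simp add: sum.delta)
    finally show ?thesis using R m True unfolding tm_def by simp
  qed
next
  case False
  then have k: "kk i \<le> m" by simp
  have "(\<Sum>j<nat p. tm (Suc m) (zc m y j) i) =
        (\<Sum>j<nat p. if a i (kk i) = y (kk i) then q ^ Suc m else 0)"
    unfolding tm_def using False zc_low[OF assms k] by simp
  also have "\<dots> = real (nat p) * (if a i (kk i) = y (kk i) then q ^ Suc m else 0)" by simp
  also have "\<dots> = (if a i (kk i) = y (kk i) then q ^ m else 0)"
    using pq p0 by (simp add: of_nat_nat mult.assoc[symmetric])
  also have "\<dots> = tm m y i"
    unfolding tm_def using k by (cases "kk i = m") auto
  finally show ?thesis by simp
qed

lemma step: assumes "y \<in> Qp p" "W m y < q ^ m"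
  shows "\<exists>z. z \<in> Qp p \<and> z m = y m \<and> W (Suc m) z < q ^ Suc m"
proof (rule ccontr)
  assume N: "\<not> ?thesis"
  have H: "q ^ Suc m \<le> W (Suc m) (zc m y j)" if "j < nat p" for j
  proof (rule ccontr)
    assume "\<not> q ^ Suc m \<le> W (Suc m) (zc m y j)"
    then have "W (Suc m) (zc m y j) < q ^ Suc m" by simp
    moreover have "zc m y j \<in> Qp p" by (rule zc_Qp[OF assms(1)])
    moreover have "zc m y j m = y m" by (rule zc_low[OF assms(1) order_refl])
    ultimately show False using N by blast
  qed
  have "W m y = (\<Sum>i. \<Sum>j<nat p. tm (Suc m) (zc m y j) i)"
  proof -
    have "tm m y = (\<lambda>i. \<Sum>j<nat p. tm (Suc m) (zc m y j) i)" by (rule ext, rule tm_split[OF assms(1)])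
    then show ?thesis unfolding W_def by simp
  qed
  also have "\<dots> = (\<Sum>j<nat p. W (Suc m) (zc m y j))"
    unfolding W_def by (rule suminf_sum) (rule tm_summable)
  also have "\<dots> \<ge> (\<Sum>j<nat p. q ^ Suc m)" by (rule sum_mono) (use H in auto)
  finally have le: "real (nat p) * q ^ Suc m \<le> W m y" by simp
  have np: "real (nat p) = real_of_int p" using p0 by simp
  have "real (nat p) * q ^ Suc m = (real_of_int p * q) * q ^ m" unfolding np by simp
  also have "\<dots> = q ^ m" using pq by simp
  finally show False using le assms(2) by linarith
qed

lemma no_cover:
  assumes x0: "x0 \<in> Qp p" and lt: "(\<Sum>i. q ^ kk i) < q ^ \<gamma>"
    and cover: "\<And>x. x \<in> Qp p \<Longrightarrow> x \<gamma> = x0 \<gamma> \<Longrightarrow> \<exists>i. x (kk i) = a i (kk i)"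
  shows False
proof -
  define nxt where "nxt l y = (SOME z. z \<in> Qp p \<and> z (\<gamma> + l) = y (\<gamma> + l) \<and> W (Suc (\<gamma> + l)) z < q ^ Suc (\<gamma> + l))"
    for l y
  define Y where "Y = rec_nat x0 (\<lambda>l y. nxt l y)"
  have Y0: "Y 0 = x0" by (simp add: Y_def)
  have YS: "Y (Suc l) = nxt l (Y l)" for l by (simp add: Y_def)
  have inv: "Y l \<in> Qp p \<and> W (\<gamma> + l) (Y l) < q ^ (\<gamma> + l)" for l
  proof (induction l)
    case 0
    have "W \<gamma> x0 < q ^ \<gamma>" using W_le[of \<gamma> x0] lt by linarith
    then show ?case using x0 Y0 by simp
  next
    case (Suc l)
    have ex: "\<exists>z. z \<in> Qp p \<and> z (\<gamma> + l) = Y l (\<gamma> + l) \<and> W (Suc (\<gamma> + l)) z < q ^ Suc (\<gamma> + l)"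
      using step Suc.IH by blast
    have "nxt l (Y l) \<in> Qp p \<and> nxt l (Y l) (\<gamma> + l) = Y l (\<gamma> + l) \<and> W (Suc (\<gamma> + l)) (nxt l (Y l)) < q ^ Suc (\<gamma> + l)"
      unfolding nxt_def by (rule someI_ex[OF ex])
    then show ?case unfolding YS by simp
  qed
  have link: "Y (Suc l) (\<gamma> + l) = Y l (\<gamma> + l)" for l
  proof -
    have ex: "\<exists>z. z \<in> Qp p \<and> z (\<gamma> + l) = Y l (\<gamma> + l) \<and> W (Suc (\<gamma> + l)) z < q ^ Suc (\<gamma> + l)"
      using step inv by blast
    have "nxt l (Y l) \<in> Qp p \<and> nxt l (Y l) (\<gamma> + l) = Y l (\<gamma> + l) \<and> W (Suc (\<gamma> + l)) (nxt l (Y l)) < q ^ Suc (\<gamma> + l)"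
      unfolding nxt_def by (rule someI_ex[OF ex])
    then show ?thesis unfolding YS by simp
  qed
  have stab: "n \<le> \<gamma> + l \<Longrightarrow> Y (l + d) n = Y l n" for n l d
  proof (induction d)
    case 0 then show ?case by simp
  next
    case (Suc d)
    have le: "n \<le> \<gamma> + (l + d)" using Suc.prems by simp
    have "Y (l + Suc d) n = red p n (Y (Suc (l + d)) (\<gamma> + (l + d)))"
      using Qp_comp[OF p0 conjunct1[OF inv[of "Suc (l + d)"]] le] by simp
    also have "\<dots> = red p n (Y (l + d) (\<gamma> + (l + d)))" using link[of "l + d"] by simp
    also have "\<dots> = Y (l + d) n" using Qp_comp[OF p0 conjunct1[OF inv[of "l + d"]] le] by simp
    finally show ?case using Suc.IH Suc.prems by simp
  qed
  define x where "x n = Y n n" for n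
  have xY: "n \<le> \<gamma> + l \<Longrightarrow> x n = Y l n" for n l
  proof (cases "l \<le> n")
    case True
    assume h: "n \<le> \<gamma> + l"
    have "Y (l + (n - l)) n = Y l n" by (rule stab[OF h])
    then show ?thesis unfolding x_def using True by simp
  next
    case False
    have "Y (n + (l - n)) n = Y n n" by (rule stab) simp
    then show ?thesis unfolding x_def using False by simp
  qed
  have xQ: "x \<in> Qp p"
    unfolding Qp_iff
  proof (intro allI conjI)
    fix n
    have Yn: "Y n \<in> Qp p" using inv by blast
    show "dy p (x n)" "0 \<le> x n" "x n < of_int p ^ n" unfolding x_def using QpD(1,2,3)[OF Yn] by auto
    have "x n = Y (Suc n) n" by (rule xY) simp
    also have "\<dots> = red p n (Y (Suc n) (Suc n))" using QpD(4)[OF conjunct1[OF inv[of "Suc n"]], of n] .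
    also have "\<dots> = red p n (x (Suc n))" unfolding x_def ..
    finally show "x n = red p n (x (Suc n))" .
  qed
  have "x \<gamma> = x0 \<gamma>" using xY[of \<gamma> 0] Y0 by simp
  then obtain j where j: "x (kk j) = a j (kk j)" using cover[OF xQ] by blast
  define l where "l = kk j - \<gamma>"
  define m where "m = \<gamma> + l"
  have km: "kk j \<le> m" unfolding m_def l_def by simp
  have "tm m (Y l) j = q ^ m"
  proof (cases "m \<le> kk j")
    case True
    then have "m = kk j" using km by simp
    moreover have "Y l m = x m" using xY[of m l] unfolding m_def by simp
    ultimately show ?thesis unfolding tm_def using j by simp
  next
    case False
    have "Y l (kk j) = x (kk j)" using xY[of "kk j" l] km unfolding m_def by simp
    then show ?thesis unfolding tm_def using j False by simp
  qed
  then have "q ^ m \<le> W m (Y l)" using W_ge by metis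
  moreover have "W m (Y l) < q ^ m" using inv[of l] unfolding m_def by simp
  ultimately show False by simp
qed

end



lemma powr_neg_nat: "(p::int) > 0 \<Longrightarrow> real_of_int p powr (- real_of_int (int n)) = (1 / real_of_int p) ^ n"
  by (simp add: powr_minus powr_realpow divide_inverse power_inverse)

lemma haar_null_empty:
  assumes p1: "(p::int) > 1" shows "haar_null p {}"
  unfolding haar_null_def
proof (intro conjI allI impI)
  fix e :: real assume e: "0 < e"
  define q where "q = 1 / real_of_int p"
  have q0: "0 < q" and q1: "q < 1" and q2: "q \<le> 1 / 2" using p1 unfolding q_def by auto
  obtain K where K: "q ^ K < e / 2" using real_arch_pow_inv[of "e / 2" q] e q1 by auto
  define k where "k i = int (K + i)" for i :: nat
  have t: "real_of_int p powr (- real_of_int (k i)) = q ^ K * q ^ i" for i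
    unfolding k_def q_def using p1 powr_neg_nat[of p "K + i"] by (simp add: power_add)
  have gs: "(\<lambda>i. q ^ i) sums (1 / (1 - q))" using geometric_sums[of q] q0 q1 by simp
  have s: "(\<lambda>i. real_of_int p powr (- real_of_int (k i))) sums (q ^ K * (1 / (1 - q)))"
    unfolding t by (rule sums_mult[OF gs])
  have "q ^ K * (1 / (1 - q)) \<le> q ^ K * 2"
    using q0 q2 by (intro mult_left_mono) (auto simp: field_simps)
  then have "q ^ K * (1 / (1 - q)) < e" using K by linarith
  then show "\<exists>(a :: nat \<Rightarrow> nat \<Rightarrow> rat) (k :: nat \<Rightarrow> int).
        (\<forall>i. a i \<in> Qp p) \<and> {} \<subseteq> (\<Union>i. qp_ball p (a i) (k i)) \<and>
        summable (\<lambda>i. real_of_int p powr (- real_of_int (k i))) \<and>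
        (\<Sum>i. real_of_int p powr (- real_of_int (k i))) < e"
    using qp_of_int_Qp[of p 0] p1 s sums_summable sums_unique
    by (intro exI[of _ "\<lambda>i. qp_of_int p 0"] exI[of _ k]) (auto simp: sums_iff)
qed auto

lemma haar_null_ball:
  assumes p1: "(p::int) > 1" and hn: "haar_null p B" and x0: "x0 \<in> Qp p"
    and sub: "\<And>x. x \<in> Qp p \<Longrightarrow> x \<gamma> = x0 \<gamma> \<Longrightarrow> x \<in> B"
  shows False
proof -
  define qq where "qq = 1 / real_of_int p"
  have q0: "0 < qq" and q1: "qq < 1" using p1 unfolding qq_def by auto
  obtain a k where a: "\<forall>i. a i \<in> Qp p" and cov: "B \<subseteq> (\<Union>i. qp_ball p (a i) (k i))"
    and sm: "summable (\<lambda>i. real_of_int p powr (- real_of_int (k i)))"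
    and lt: "(\<Sum>i. real_of_int p powr (- real_of_int (k i))) < qq ^ \<gamma>"
    using hn q0 unfolding haar_null_def by (meson zero_less_power)
  have k0: "0 \<le> k i" for i
  proof -
    have "sum (\<lambda>i. real_of_int p powr (- real_of_int (k i))) {i} \<le> (\<Sum>i. real_of_int p powr (- real_of_int (k i)))"
      by (rule sum_le_suminf[OF sm]) auto
    then have "real_of_int p powr (- real_of_int (k i)) < qq ^ \<gamma>" using lt by simp
    also have "\<dots> \<le> 1" using q0 q1 by (simp add: power_le_one)
    finally have h: "real_of_int p powr (- real_of_int (k i)) < 1" .
    have pp: "1 < real_of_int p" using p1 by simp
    have "real_of_int p powr (- real_of_int (k i)) < real_of_int p powr 0" using h p1 by simp
    then have "- real_of_int (k i) < 0" using powr_less_cancel_iff[OF pp] by blast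
    then show ?thesis by simp
  qed
  define kk where "kk i = nat (k i)" for i
  have kk: "k i = int (kk i)" for i using k0[of i] unfolding kk_def by simp
  have pw: "real_of_int p powr (- real_of_int (k i)) = (1 / real_of_int p) ^ kk i" for i
    unfolding kk using powr_neg_nat p1 by simp
  have sm': "summable (\<lambda>i. (1 / real_of_int p) ^ kk i)" using sm unfolding pw .
  have lt2: "(\<Sum>i. (1 / real_of_int p) ^ kk i) < (1 / real_of_int p) ^ \<gamma>" using lt unfolding pw qq_def .
  interpret nullctx p a kk using p1 a sm' by unfold_locales auto
  have lt': "(\<Sum>i. nullctx.q p ^ kk i) < nullctx.q p ^ \<gamma>" using lt2 unfolding q_def .
  show False
  proof (rule no_cover[OF x0 lt'])
    fix x assume x: "x \<in> Qp p" "x \<gamma> = x0 \<gamma>"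
    then have "x \<in> B" by (rule sub)
    then obtain i where i: "x \<in> qp_ball p (a i) (k i)" using cov by blast
    then have "red p (kk i) (x (kk i) - a i (kk i)) = 0"
      unfolding qp_ball_def in_pk_def qp_diff_def kk by simp
    then have "x (kk i) = a i (kk i)"
      using red_zero_iff[of p "x (kk i)" "kk i" "a i (kk i)"] p1 QpD(2,3)[OF x(1)] QpD(2,3)[OF a[rule_format, of i]]
      by simp
    then show "\<exists>i. x (kk i) = a i (kk i)" by blast
  qed
qed




context setting begin

lemma frac0: assumes "x \<in> Qp p" shows "x \<gamma> = of_int \<lfloor>x \<gamma>\<rfloor> + x 0"
proof -
  have "x 0 = red p 0 (x \<gamma>)" using Qp_comp[OF p0 assms, of 0 \<gamma>] by simp
  then show ?thesis by (simp add: red_def)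
qed

lemma floor_range: assumes "x \<in> Qp p" shows "\<lfloor>x \<gamma>\<rfloor> \<in> {0..<p ^ \<gamma>}"
proof -
  have "0 \<le> x \<gamma>" "x \<gamma> < of_int p ^ \<gamma>" using QpD(2,3)[OF assms] by auto
  then have "0 \<le> \<lfloor>x \<gamma>\<rfloor>" "x \<gamma> < of_int (p ^ \<gamma>)" by auto
  then show ?thesis by (simp add: floor_less_iff)
qed

lemma int_small: "(-1::rat) < of_int m \<Longrightarrow> of_int m < (1::rat) \<Longrightarrow> m = 0"
proof -
  assume a: "(-1::rat) < of_int m" "of_int m < (1::rat)"
  have "(of_int (-1) :: rat) < of_int m" using a(1) by simp
  then have "-1 < m" by (simp only: of_int_less_iff)
  moreover have "(of_int m :: rat) < of_int 1" using a(2) by simp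
  then have "m < 1" by (simp only: of_int_less_iff)
  ultimately show "m = 0" by simp
qed

lemma ii_iii: assumes "tiles_ZN (p ^ \<gamma>) C" shows "tiles_Qp p Om"
proof -
  obtain S where S: "S \<subseteq> {0..<p ^ \<gamma>}"
    and H: "\<forall>r\<in>{0..<p ^ \<gamma>}. \<exists>!cs. cs \<in> C \<times> S \<and> (fst cs + snd cs) mod p ^ \<gamma> = r"
    using assms unfolding tiles_ZN_def by (elim exE conjE) (rule that; assumption)
  define e where "e s y = (\<lambda>n. red p n (of_int s + y 0))" for s :: int and y :: "nat \<Rightarrow> rat"
  define T where "T = {e s y | s y. s \<in> S \<and> y \<in> Qp p}"
  have eQ: "e s y \<in> Qp p" if "y \<in> Qp p" for s y
    unfolding e_def by (rule emb_Qp[OF p0 dy_add[OF p0 dy_int QpD(1)[OF that]]])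
  have eg: "e s y \<gamma> = of_int s + y 0" if "y \<in> Qp p" "s \<in> S" for s y
  proof -
    have s: "0 \<le> s" "s + 1 \<le> p ^ \<gamma>" using S that(2) by auto
    have y: "0 \<le> y 0" "y 0 < 1" using QpD(2,3)[OF that(1), of 0] by auto
    have "of_int s + y 0 < of_int (s + 1)" using y by simp
    also have "\<dots> \<le> of_int (p ^ \<gamma>)" using s(2) by (simp only: of_int_le_iff)
    finally have "of_int s + y 0 < of_int p ^ \<gamma>" by simp
    moreover have "0 \<le> of_int s + y 0" using s y by simp
    ultimately show ?thesis unfolding e_def by (rule red_id[OF p0, rotated])
  qed
  have good: "\<forall>x\<in>Qp p. \<exists>!t. t \<in> T \<and> qp_diff p x t \<in> Om"
  proof
    fix x assume x: "x \<in> Qp p"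
    define r where "r = \<lfloor>x \<gamma>\<rfloor>"
    have r: "r \<in> {0..<p ^ \<gamma>}" unfolding r_def by (rule floor_range[OF x])
    have xg: "x \<gamma> = of_int r + x 0" unfolding r_def by (rule frac0[OF x])
    obtain cs where cs0: "cs \<in> C \<times> S \<and> (fst cs + snd cs) mod p ^ \<gamma> = r"
      and U: "\<forall>y. y \<in> C \<times> S \<and> (fst y + snd y) mod p ^ \<gamma> = r \<longrightarrow> y = cs"
      using H[rule_format, OF r] by (elim ex1E) blast
    from cs0 obtain c s where cs: "cs = (c, s)" "c \<in> C" "s \<in> S" "(c + s) mod p ^ \<gamma> = r" by (cases cs) auto
    have r0: "0 \<le> r" "r < p ^ \<gamma>" using r by auto
    show "\<exists>!t. t \<in> T \<and> qp_diff p x t \<in> Om"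
    proof (rule ex1I[of _ "e s x"])
      have "red p \<gamma> (x \<gamma> - e s x \<gamma>) = red p \<gamma> (of_int r - of_int s)" using xg eg[OF x cs(3)] by simp
      also have "\<dots> = of_int c" using key_iff swapC[OF cs(2) r0] cs(4) by blast
      finally show "e s x \<in> T \<and> qp_diff p x (e s x) \<in> Om"
        using diff_Om[OF x eQ[OF x]] cs(2,3) x unfolding T_def by blast
    next
      fix t assume t: "t \<in> T \<and> qp_diff p x t \<in> Om"
      then obtain s' y where t': "t = e s' y" "s' \<in> S" "y \<in> Qp p" unfolding T_def by blast
      obtain c' where c': "c' \<in> C" "red p \<gamma> (x \<gamma> - t \<gamma>) = of_int c'"
        using t diff_Om[OF x eQ[OF t'(3)]] t'(1) by blast
      have d: "x \<gamma> - t \<gamma> = (of_int r - of_int s') + (x 0 - y 0)" using xg eg[OF t'(3,2)] t'(1) by simp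
      define f where "f = \<lfloor>(x \<gamma> - t \<gamma>) / of_int p ^ \<gamma>\<rfloor>"
      have "x \<gamma> - t \<gamma> = of_int c' + of_int p ^ \<gamma> * of_int f"
        using red_decomp[of "x \<gamma> - t \<gamma>" p \<gamma>] c'(2) unfolding f_def by simp
      then have "x 0 - y 0 = of_int (c' + p ^ \<gamma> * f - r + s')" using d by simp
      then obtain mm where e: "x 0 - y 0 = of_int mm" by blast
      have bd: "-1 < x 0 - y 0" "x 0 - y 0 < 1" using QpD(2,3)[OF x, of 0] QpD(2,3)[OF t'(3), of 0] by auto
      have "mm = 0" by (rule int_small) (use bd in \<open>unfold e\<close>)
      then have "x 0 - y 0 = 0" using e by simp
      then have y0: "y 0 = x 0" by simp
      have "red p \<gamma> (of_int r - of_int s') = of_int c'" using c'(2) d y0 by simp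
      then have "(r - s') mod p ^ \<gamma> = c'" using key_iff by blast
      then have "(c' + s') mod p ^ \<gamma> = r" using swapC[OF c'(1) r0] by blast
      then have "(c', s') = cs" using U[rule_format, of "(c', s')"] c'(1) t'(2) by simp
      then have "s' = s" using cs by simp
      then show "t = e s x" using t'(1) y0 unfolding e_def by simp
    qed
  qed
  have TQ: "T \<subseteq> Qp p" unfolding T_def using eQ by blast
  have E: "{x \<in> Qp p. \<not> (\<exists>!t. t \<in> T \<and> qp_diff p x t \<in> Om)} = {}" using good by blast
  show ?thesis unfolding tiles_Qp_def
    by (intro exI[of _ T] conjI TQ) (simp only: E haar_null_empty[OF p1])
qed

lemma iii_ii: assumes "tiles_Qp p Om" shows "tiles_ZN (p ^ \<gamma>) C"
proof -
  obtain T where TQ: "T \<subseteq> Qp p" and hn: "haar_null p {x \<in> Qp p. \<not> (\<exists>!t. t \<in> T \<and> qp_diff p x t \<in> Om)}"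
    using assms unfolding tiles_Qp_def by (elim exE conjE) (rule that; assumption)
  have good: "\<exists>!t. t \<in> T \<and> qp_diff p x t \<in> Om" if x: "x \<in> Qp p" for x
  proof (rule ccontr)
    assume bad: "\<not> (\<exists>!t. t \<in> T \<and> qp_diff p x t \<in> Om)"
    show False
    proof (rule haar_null_ball[OF p1 hn x])
      fix z assume z: "z \<in> Qp p" "z \<gamma> = x \<gamma>"
      have eq: "(t \<in> T \<and> qp_diff p z t \<in> Om) = (t \<in> T \<and> qp_diff p x t \<in> Om)" for t
      proof (cases "t \<in> T")
        case True
        then have tq: "t \<in> Qp p" using TQ by blast
        show ?thesis using True by (simp only: diff_Om[OF z(1) tq] diff_Om[OF x tq] z(2))
      qed simp
      have "(\<exists>!t. t \<in> T \<and> qp_diff p z t \<in> Om) = (\<exists>!t. t \<in> T \<and> qp_diff p x t \<in> Om)"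
        by (simp only: eq)
      then have "\<not> (\<exists>!t. t \<in> T \<and> qp_diff p z t \<in> Om)" using bad by blast
      then show "z \<in> {x \<in> Qp p. \<not> (\<exists>!t. t \<in> T \<and> qp_diff p x t \<in> Om)}" using z(1) by blast
    qed
  qed
  define S where "S = {s. \<exists>t\<in>T. t \<gamma> = of_int s}"
  have S: "S \<subseteq> {0..<p ^ \<gamma>}"
  proof
    fix s assume "s \<in> S"
    then obtain t where t: "t \<in> T" "t \<gamma> = of_int s" unfolding S_def by blast
    have "\<lfloor>t \<gamma>\<rfloor> \<in> {0..<p ^ \<gamma>}" using floor_range TQ t(1) by blast
    then show "s \<in> {0..<p ^ \<gamma>}" using t(2) by simp
  qed
  have memb: "qp_diff p (qp_of_int p r) t \<in> Om \<longleftrightarrow> (\<exists>c\<in>C. (c + s) mod p ^ \<gamma> = r)"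
    if "t \<in> T" "t \<gamma> = of_int s" "0 \<le> r" "r < p ^ \<gamma>" for t s r
  proof -
    have tq: "t \<in> Qp p" using that TQ by blast
    have "qp_diff p (qp_of_int p r) t \<in> Om \<longleftrightarrow> (\<exists>c\<in>C. red p \<gamma> (qp_of_int p r \<gamma> - t \<gamma>) = of_int c)"
      by (rule diff_Om[OF qp_of_int_Qp[OF p0] tq])
    also have "\<dots> \<longleftrightarrow> (\<exists>c\<in>C. red p \<gamma> (of_int r - of_int s) = of_int c)"
      using Qp_of_int_gamma[OF that(3,4)] that(2) by simp
    also have "\<dots> \<longleftrightarrow> (\<exists>c\<in>C. (c + s) mod p ^ \<gamma> = r)" by (rule key_iff2[OF that(3,4)])
    finally show ?thesis .
  qed
  show ?thesis unfolding tiles_ZN_def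
  proof (intro exI[of _ S] conjI S ballI)
    fix r assume r: "r \<in> {0..<p ^ \<gamma>}"
    then have r0: "0 \<le> r" "r < p ^ \<gamma>" by auto
    define x where "x = qp_of_int p r"
    have xQ: "x \<in> Qp p" unfolding x_def by (rule qp_of_int_Qp[OF p0])
    obtain t where t: "t \<in> T" "qp_diff p x t \<in> Om"
      and U: "\<forall>t'. t' \<in> T \<and> qp_diff p x t' \<in> Om \<longrightarrow> t' = t"
      using good[OF xQ] by (elim ex1E) blast
    obtain c where c: "c \<in> C" "red p \<gamma> (x \<gamma> - t \<gamma>) = of_int c"
      using diff_Om[OF xQ] t TQ by blast
    define f where "f = \<lfloor>(x \<gamma> - t \<gamma>) / of_int p ^ \<gamma>\<rfloor>"
    have "x \<gamma> - t \<gamma> = of_int c + of_int p ^ \<gamma> * of_int f"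
      using red_decomp[of "x \<gamma> - t \<gamma>" p \<gamma>] c(2) unfolding f_def by simp
    then have ts: "t \<gamma> = of_int (r - c - p ^ \<gamma> * f)"
      using Qp_of_int_gamma[OF r0] unfolding x_def by (simp add: algebra_simps)
    define s where "s = r - c - p ^ \<gamma> * f"
    have sS: "s \<in> S" unfolding S_def s_def using t(1) ts by blast
    have ts': "t \<gamma> = of_int s" using ts unfolding s_def .
    have xg: "x \<gamma> = of_int r" unfolding x_def by (rule Qp_of_int_gamma[OF r0])
    have "red p \<gamma> (of_int r - of_int s) = of_int c" using c(2) unfolding ts' xg .
    then have "(r - s) mod p ^ \<gamma> = c" using key_iff by blast
    then have cs: "(c + s) mod p ^ \<gamma> = r" using swapC[OF c(1) r0] by blast
    show "\<exists>!cs. cs \<in> C \<times> S \<and> (fst cs + snd cs) mod p ^ \<gamma> = r"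
    proof (rule ex1I[of _ "(c, s)"])
      show "(c, s) \<in> C \<times> S \<and> (fst (c, s) + snd (c, s)) mod p ^ \<gamma> = r" using c(1) sS cs by simp
    next
      fix cs' assume h: "cs' \<in> C \<times> S \<and> (fst cs' + snd cs') mod p ^ \<gamma> = r"
      obtain c' s' where cs': "cs' = (c', s')" by (cases cs')
      have c': "c' \<in> C" "s' \<in> S" "(c' + s') mod p ^ \<gamma> = r" using h cs' by auto
      obtain t' where t': "t' \<in> T" "t' \<gamma> = of_int s'" using c'(2) unfolding S_def by blast
      have "qp_diff p x t' \<in> Om" unfolding x_def using memb[OF t' r0] c' by blast
      then have "t' = t" using U t'(1) by blast
      then have "s' = s" using t'(2) ts' by simp
      moreover have "c' = c"
      proof -
        have "(r - s) mod p ^ \<gamma> = c" using swapC[OF c(1) r0] cs by blast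
        moreover have "(r - s') mod p ^ \<gamma> = c'" using swapC[OF c'(1) r0] c'(3) by blast
        ultimately show ?thesis using \<open>s' = s\<close> by simp
      qed
      ultimately show "cs' = (c, s)" using cs' by simp
    qed
  qed
qed

end

theorem lemma2p10:
  fixes p :: int and \<gamma> :: nat and C :: "int set" and \<Omega> :: "(nat \<Rightarrow> rat) set"
  assumes "prime p" and "\<gamma> \<ge> 1"
    and "C \<subseteq> {0..<p ^ \<gamma>}" and "C \<noteq> {}"
    and "\<Omega> = (\<Union>c\<in>C. qp_ball p (qp_of_int p c) (int \<gamma>))"
  shows "(tiles_Zp p \<Omega> \<longleftrightarrow> tiles_ZN (p ^ \<gamma>) C) \<and>
         (tiles_ZN (p ^ \<gamma>) C \<longleftrightarrow> tiles_Qp p \<Omega>)"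
proof -
  interpret setting p \<gamma> C using assms(1-4) by unfold_locales auto
  have O: "\<Omega> = Om" using assms(5) ball_eq by simp
  show ?thesis unfolding O using i_ii ii_i ii_iii iii_ii by blast
qed

end
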